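(* Let $G$ be a group, $H$ a subgroup, $A$ a complex vector space, and let $g,g_1,\dots,g_n:G\to A$ and $f_1,\dots,f_n:G\to\mathbb C$ be functions such that $\chi_H(xy)g(y)=\sum_{i=1}^n f_i(x)g_i(y)$ for all $x,y\in G$. Then there is a finite set $F\subseteq G$ such that $g(y)=0$ for all $y\notin FH$.
   Context: $\chi_H$ is the characteristic function of $H$. *)

theory Defs
  imports Complex_Main "HOL-Library.Indicator_Function" "HOL-Algebra.Coset"
begin

end

theory Submission
  imports Defs "HOL-Algebra.Left_Coset"
begin

lemma hom_sys:
  fixes a :: "'k \<Rightarrow> nat \<Rightarrow> complex"
  assumes "finite K" "card K > n"
  shows "\<exists>c. (\<exists>k\<in>K. c k \<noteq> 0) \<and> (\<forall>i<n. (\<Sum>k\<in>K. c k * a k i) = 0)"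
  using assms
proof (induction n arbitrary: K a)
  case 0
  then obtain k where "k \<in> K" by (metis card.empty all_not_in_conv less_irrefl)
  then show ?case by (rule_tac x="\<lambda>_. 1" in exI) auto
next
  case (Suc n)
  show ?case
  proof (cases "\<forall>k\<in>K. a k n = 0")
    case True
    from Suc.IH[of K a] Suc.prems obtain c where c: "\<exists>k\<in>K. c k \<noteq> 0" "\<forall>i<n. (\<Sum>k\<in>K. c k * a k i) = 0"
      by auto
    have "\<forall>i<Suc n. (\<Sum>k\<in>K. c k * a k i) = 0"
      using c True by (auto simp: less_Suc_eq)
    with c show ?thesis by blast
  next
    case False
    then obtain p where p: "p \<in> K" "a p n \<noteq> 0" by blast
    define K' where "K' = K - {p}"
    have fK': "finite K'" using Suc.prems K'_def by auto
    have cK': "card K' > n" using Suc.prems p K'_def by auto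
    define b where "b k i = a k i - (a k n / a p n) * a p i" for k i
    from Suc.IH[OF fK' cK', of b] obtain c' where
      c': "\<exists>k\<in>K'. c' k \<noteq> 0" "\<forall>i<n. (\<Sum>k\<in>K'. c' k * b k i) = 0" by blast
    define c where "c k = (if k = p then - (\<Sum>k\<in>K'. c' k * a k n) / a p n else c' k)" for k
    have Kdec: "K = insert p K'" "p \<notin> K'" using p K'_def by auto
    have sK': "(\<Sum>k\<in>K'. c k * a k i) = (\<Sum>k\<in>K'. c' k * a k i)" for i
      by (rule sum.cong) (auto simp: c_def Kdec)
    have eq: "(\<Sum>k\<in>K. c k * a k i) = c p * a p i + (\<Sum>k\<in>K'. c' k * a k i)" for i
      using fK' Kdec sK' by simp
    have "\<forall>i<Suc n. (\<Sum>k\<in>K. c k * a k i) = 0"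
    proof (intro allI impI)
      fix i assume "i < Suc n"
      then consider "i < n" | "i = n" by linarith
      then show "(\<Sum>k\<in>K. c k * a k i) = 0"
      proof cases
        case 1
        have "(\<Sum>k\<in>K'. c' k * b k i) = (\<Sum>k\<in>K'. c' k * a k i) - (\<Sum>k\<in>K'. c' k * a k n) / a p n * a p i"
          by (simp add: b_def algebra_simps sum_subtractf sum_distrib_left sum_distrib_right sum_divide_distrib)
        moreover have "c p = - (\<Sum>k\<in>K'. c' k * a k n) / a p n" by (simp add: c_def)
        ultimately show ?thesis using c'(2) 1 eq[of i] by (simp add: algebra_simps)
      next
        case 2
        have "c p = - (\<Sum>k\<in>K'. c' k * a k n) / a p n" by (simp add: c_def)
        then show ?thesis using eq[of i] p(2) 2 by simp
      qed
    qed
    moreover have "\<exists>k\<in>K. c k \<noteq> 0" using c'(1) Kdec by (auto simp: c_def)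
    ultimately show ?thesis by blast
  qed
qed

theorem lemma1p6:
  fixes G :: "('g, 'b) monoid_scheme"
    and H :: "'g set"
    and scale :: "complex \<Rightarrow> 'a :: ab_group_add \<Rightarrow> 'a"
    and g :: "'g \<Rightarrow> 'a"
    and gs :: "nat \<Rightarrow> 'g \<Rightarrow> 'a"
    and fs :: "nat \<Rightarrow> 'g \<Rightarrow> complex"
    and n :: nat
  assumes "vector_space scale"
    and "group G"
    and "subgroup H G"
    and "\<forall>x\<in>carrier G. \<forall>y\<in>carrier G.
           scale (indicator H (x \<otimes>\<^bsub>G\<^esub> y)) (g y)
           = (\<Sum>i\<in>{1..n}. scale (fs i x) (gs i y))"
  shows "\<exists>F. finite F \<and> F \<subseteq> carrier G \<and>
           (\<forall>y\<in>carrier G. y \<notin> F <#>\<^bsub>G\<^esub> H \<longrightarrow> g y = 0)"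
proof -
  interpret V: vector_space scale by fact
  interpret Gr: group G by fact
  interpret Hs: subgroup H G by fact
  note eqn = assms(4)
  define S where "S = {y \<in> carrier G. g y \<noteq> 0}"
  have coset_iff: "inv\<^bsub>G\<^esub> k \<otimes>\<^bsub>G\<^esub> j \<in> H \<longleftrightarrow> k <#\<^bsub>G\<^esub> H = j <#\<^bsub>G\<^esub> H"
    if "k \<in> carrier G" "j \<in> carrier G" for k j
  proof
    assume "inv\<^bsub>G\<^esub> k \<otimes>\<^bsub>G\<^esub> j \<in> H"
    then have "j \<in> k <#\<^bsub>G\<^esub> H" using Hs.lcos_module_rev[OF assms(2)] that by blast
    then show "k <#\<^bsub>G\<^esub> H = j <#\<^bsub>G\<^esub> H" using Gr.l_repr_independence that assms(3) by blast
  next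
    assume "k <#\<^bsub>G\<^esub> H = j <#\<^bsub>G\<^esub> H"
    then have "j \<in> k <#\<^bsub>G\<^esub> H" using Gr.lcos_self that assms(3) by blast
    then show "inv\<^bsub>G\<^esub> k \<otimes>\<^bsub>G\<^esub> j \<in> H" using Hs.lcos_module_imp[OF assms(2)] that by blast
  qed
  have bound: False if K: "finite K" "card K = Suc n" "K \<subseteq> S"
      and dist: "\<And>k j. k \<in> K \<Longrightarrow> j \<in> K \<Longrightarrow> k <#\<^bsub>G\<^esub> H = j <#\<^bsub>G\<^esub> H \<Longrightarrow> k = j" for K
  proof -
    obtain c where c: "\<exists>k\<in>K. c k \<noteq> 0"
      "\<forall>i<n. (\<Sum>k\<in>K. c k * fs (Suc i) (inv\<^bsub>G\<^esub> k)) = 0"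
      using hom_sys[OF K(1), of n "\<lambda>k i. fs (Suc i) (inv\<^bsub>G\<^esub> k)"] K(2) by auto
    obtain j where j: "j \<in> K" "c j \<noteq> 0" using c(1) by blast
    have jS: "j \<in> carrier G" "g j \<noteq> 0" using j K(3) S_def by auto
    have "(\<Sum>k\<in>K. scale (c k) (scale (indicator H (inv\<^bsub>G\<^esub> k \<otimes>\<^bsub>G\<^esub> j)) (g j)))
        = (\<Sum>k\<in>K. if k = j then scale (c j) (g j) else 0)"
    proof (rule sum.cong)
      fix k assume k: "k \<in> K"
      then have kc: "k \<in> carrier G" using K(3) S_def by auto
      show "scale (c k) (scale (indicator H (inv\<^bsub>G\<^esub> k \<otimes>\<^bsub>G\<^esub> j)) (g j))
          = (if k = j then scale (c j) (g j) else 0)"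
      proof (cases "k = j")
        case True
        then show ?thesis using jS Hs.one_closed by (simp add: indicator_def)
      next
        case False
        then have "inv\<^bsub>G\<^esub> k \<otimes>\<^bsub>G\<^esub> j \<notin> H" using coset_iff[OF kc jS(1)] dist[OF k j(1)] by blast
        then show ?thesis using False by (simp add: indicator_def)
      qed
    qed simp
    also have "\<dots> = scale (c j) (g j)" using K(1) j(1) by simp
    finally have L: "(\<Sum>k\<in>K. scale (c k) (scale (indicator H (inv\<^bsub>G\<^esub> k \<otimes>\<^bsub>G\<^esub> j)) (g j)))
        = scale (c j) (g j)" .
    have "(\<Sum>k\<in>K. scale (c k) (scale (indicator H (inv\<^bsub>G\<^esub> k \<otimes>\<^bsub>G\<^esub> j)) (g j)))
        = (\<Sum>k\<in>K. scale (c k) (\<Sum>i\<in>{1..n}. scale (fs i (inv\<^bsub>G\<^esub> k)) (gs i j)))"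
    proof (rule sum.cong)
      fix k assume "k \<in> K"
      then have kc: "k \<in> carrier G" using K(3) S_def by auto
      show "scale (c k) (scale (indicator H (inv\<^bsub>G\<^esub> k \<otimes>\<^bsub>G\<^esub> j)) (g j))
        = scale (c k) (\<Sum>i\<in>{1..n}. scale (fs i (inv\<^bsub>G\<^esub> k)) (gs i j))"
        using eqn kc jS(1) by simp
    qed simp
    also have "\<dots> = (\<Sum>k\<in>K. \<Sum>i\<in>{1..n}. scale (c k * fs i (inv\<^bsub>G\<^esub> k)) (gs i j))"
      by (simp add: V.scale_sum_right)
    also have "\<dots> = (\<Sum>i\<in>{1..n}. \<Sum>k\<in>K. scale (c k * fs i (inv\<^bsub>G\<^esub> k)) (gs i j))"
      by (rule sum.swap)
    also have "\<dots> = (\<Sum>i\<in>{1..n}. scale (\<Sum>k\<in>K. c k * fs i (inv\<^bsub>G\<^esub> k)) (gs i j))"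
      by (simp add: V.scale_sum_left)
    also have "\<dots> = 0"
    proof (rule sum.neutral, rule ballI)
      fix i assume i: "i \<in> {1..n}"
      then have "i = Suc (i - 1)" "i - 1 < n" by auto
      then have "(\<Sum>k\<in>K. c k * fs i (inv\<^bsub>G\<^esub> k)) = 0" using c(2) by metis
      then show "scale (\<Sum>k\<in>K. c k * fs i (inv\<^bsub>G\<^esub> k)) (gs i j) = 0" by simp
    qed
    finally have "scale (c j) (g j) = 0" using L by simp
    then show False using j(2) jS(2) by simp
  qed
  define C where "C = (\<lambda>y. y <#\<^bsub>G\<^esub> H) ` S"
  define r where "r X = (SOME y. y \<in> S \<and> y <#\<^bsub>G\<^esub> H = X)" for X
  have r: "r X \<in> S \<and> r X <#\<^bsub>G\<^esub> H = X" if "X \<in> C" for X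
    unfolding r_def by (rule someI_ex) (use that C_def in auto)
  have finC: "finite C"
  proof (rule ccontr)
    assume "infinite C"
    then obtain T where T: "T \<subseteq> C" "finite T" "card T = Suc n"
      using infinite_arbitrarily_large by blast
    have inj: "inj_on r T"
      by (rule inj_onI) (metis r T(1) subsetD)
    show False
    proof (rule bound[of "r ` T"])
      show "finite (r ` T)" using T by simp
      show "card (r ` T) = Suc n" using T inj by (simp add: card_image)
      show "r ` T \<subseteq> S" using r T by blast
      show "k = j" if "k \<in> r ` T" "j \<in> r ` T" "k <#\<^bsub>G\<^esub> H = j <#\<^bsub>G\<^esub> H" for k j
        using that r T(1) by (metis imageE subsetD)
    qed
  qed
  show ?thesis
  proof (intro exI conjI ballI impI)
    show "finite (r ` C)" using finC by simp
    show "r ` C \<subseteq> carrier G" using r S_def by auto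
    fix y assume y: "y \<in> carrier G" "y \<notin> r ` C <#>\<^bsub>G\<^esub> H"
    show "g y = 0"
    proof (rule ccontr)
      assume "g y \<noteq> 0"
      then have yS: "y \<in> S" using y S_def by simp
      then have X: "y <#\<^bsub>G\<^esub> H \<in> C" using C_def by simp
      then have "y \<in> r (y <#\<^bsub>G\<^esub> H) <#\<^bsub>G\<^esub> H" using r Gr.lcos_self y(1) assms(3) by metis
      also have "\<dots> = {r (y <#\<^bsub>G\<^esub> H)} <#>\<^bsub>G\<^esub> H" by (rule l_coset_eq_set_mult)
      also have "\<dots> \<subseteq> r ` C <#>\<^bsub>G\<^esub> H" using X by (intro mono_set_mult) auto
      finally show False using y(2) by blast
    qed
  qed
qed

end
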